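(* Let $\mathcal{C}$ be a skeletally small triangulated category, $H$ a $\mathbb{Q}$-subspace of $G(\mathcal{C})_{\mathbb{Q}}$, and $\mathcal{I}(H)$ the set of dense subcategories $\mathcal{D}$ of $\mathcal{C}$ with $\operatorname{image}(G(\mathcal{D})_{\mathbb{Q}}\to G(\mathcal{C})_{\mathbb{Q}})=H$, ordered by inclusion. Then $\mathcal{I}(H)$ has a unique maximal element.
   Context: $G(-)$ denotes the Grothendieck group of a triangulated category; $H_{\mathbb{Q}}=H\otimes_{\mathbb{Z}}\mathbb{Q}$. A dense subcategory is a triangulated subcategory $\mathcal{D}$ (full, closed under $[\pm1]$, isomorphisms and cones) such that for every $U\in\mathcal{C}$ there is $V$ with $U\oplus V\in\mathcal{D}$. *)

theory Defs
  imports Complex_Main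
begin

text \<open>A category with an explicit object set is automatically (skeletally) small.
  Composition: cmp g f = g after f.\<close>

record ('o, 'm) tricat =
  obj :: "'o set"
  mor :: "'m set"
  src :: "'m \<Rightarrow> 'o"
  tgt :: "'m \<Rightarrow> 'o"
  cmp :: "'m \<Rightarrow> 'm \<Rightarrow> 'm"
  idm :: "'o \<Rightarrow> 'm"
  pls :: "'m \<Rightarrow> 'm \<Rightarrow> 'm"
  zro :: "'o \<Rightarrow> 'o \<Rightarrow> 'm"
  ngt :: "'m \<Rightarrow> 'm"
  shO :: "'o \<Rightarrow> 'o"
  shM :: "'m \<Rightarrow> 'm"
  dist :: "('m \<times> 'm \<times> 'm) set"

definition hom :: "('o,'m,'x) tricat_scheme \<Rightarrow> 'o \<Rightarrow> 'o \<Rightarrow> 'm set" where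
  "hom C X Y = {f \<in> mor C. src C f = X \<and> tgt C f = Y}"

definition is_category :: "('o,'m,'x) tricat_scheme \<Rightarrow> bool" where
  "is_category C \<longleftrightarrow>
     (\<forall>f \<in> mor C. src C f \<in> obj C \<and> tgt C f \<in> obj C) \<and>
     (\<forall>X \<in> obj C. idm C X \<in> hom C X X) \<and>
     (\<forall>X\<in>obj C. \<forall>Y\<in>obj C. \<forall>Z\<in>obj C. \<forall>f \<in> hom C X Y. \<forall>g \<in> hom C Y Z.
        cmp C g f \<in> hom C X Z) \<and>
     (\<forall>W\<in>obj C. \<forall>X\<in>obj C. \<forall>Y\<in>obj C. \<forall>Z\<in>obj C.
        \<forall>f \<in> hom C W X. \<forall>g \<in> hom C X Y. \<forall>h \<in> hom C Y Z.
        cmp C h (cmp C g f) = cmp C (cmp C h g) f) \<and>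
     (\<forall>X\<in>obj C. \<forall>Y\<in>obj C. \<forall>f \<in> hom C X Y.
        cmp C f (idm C X) = f \<and> cmp C (idm C Y) f = f)"

definition is_preadditive :: "('o,'m,'x) tricat_scheme \<Rightarrow> bool" where
  "is_preadditive C \<longleftrightarrow> is_category C \<and>
     (\<forall>X\<in>obj C. \<forall>Y\<in>obj C.
        zro C X Y \<in> hom C X Y \<and>
        (\<forall>f \<in> hom C X Y. ngt C f \<in> hom C X Y \<and>
           pls C f (zro C X Y) = f \<and> pls C f (ngt C f) = zro C X Y) \<and>
        (\<forall>f \<in> hom C X Y. \<forall>g \<in> hom C X Y. pls C f g \<in> hom C X Y \<and> pls C f g = pls C g f) \<and>
        (\<forall>f \<in> hom C X Y. \<forall>g \<in> hom C X Y. \<forall>h \<in> hom C X Y.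
           pls C (pls C f g) h = pls C f (pls C g h))) \<and>
     (\<forall>X\<in>obj C. \<forall>Y\<in>obj C. \<forall>Z\<in>obj C.
        \<forall>f \<in> hom C X Y. \<forall>f' \<in> hom C X Y. \<forall>g \<in> hom C Y Z. \<forall>g' \<in> hom C Y Z.
          cmp C (pls C g g') f = pls C (cmp C g f) (cmp C g' f) \<and>
          cmp C g (pls C f f') = pls C (cmp C g f) (cmp C g f'))"

definition is_zero_obj :: "('o,'m,'x) tricat_scheme \<Rightarrow> 'o \<Rightarrow> bool" where
  "is_zero_obj C Z \<longleftrightarrow> Z \<in> obj C \<and> idm C Z = zro C Z Z"

definition is_biprod :: "('o,'m,'x) tricat_scheme \<Rightarrow> 'o \<Rightarrow> 'o \<Rightarrow> 'o \<Rightarrow> bool" where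
  "is_biprod C U V W \<longleftrightarrow> W \<in> obj C \<and>
     (\<exists>i1 \<in> hom C U W. \<exists>i2 \<in> hom C V W. \<exists>p1 \<in> hom C W U. \<exists>p2 \<in> hom C W V.
        cmp C p1 i1 = idm C U \<and> cmp C p2 i2 = idm C V \<and>
        cmp C p1 i2 = zro C V U \<and> cmp C p2 i1 = zro C U V \<and>
        pls C (cmp C i1 p1) (cmp C i2 p2) = idm C W)"

definition is_additive :: "('o,'m,'x) tricat_scheme \<Rightarrow> bool" where
  "is_additive C \<longleftrightarrow> is_preadditive C \<and> (\<exists>Z. is_zero_obj C Z) \<and>
     (\<forall>U\<in>obj C. \<forall>V\<in>obj C. \<exists>W. is_biprod C U V W)"

definition is_iso_mor :: "('o,'m,'x) tricat_scheme \<Rightarrow> 'm \<Rightarrow> bool" where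
  "is_iso_mor C f \<longleftrightarrow> f \<in> mor C \<and>
     (\<exists>g \<in> hom C (tgt C f) (src C f).
        cmp C g f = idm C (src C f) \<and> cmp C f g = idm C (tgt C f))"

definition isomorphic :: "('o,'m,'x) tricat_scheme \<Rightarrow> 'o \<Rightarrow> 'o \<Rightarrow> bool" where
  "isomorphic C X Y \<longleftrightarrow> X \<in> obj C \<and> Y \<in> obj C \<and> (\<exists>f \<in> hom C X Y. is_iso_mor C f)"

definition is_shift :: "('o,'m,'x) tricat_scheme \<Rightarrow> bool" where
  "is_shift C \<longleftrightarrow>
     (\<forall>X\<in>obj C. shO C X \<in> obj C) \<and>
     (\<forall>X\<in>obj C. \<forall>Y\<in>obj C. bij_betw (shM C) (hom C X Y) (hom C (shO C X) (shO C Y))) \<and>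
     (\<forall>X\<in>obj C. shM C (idm C X) = idm C (shO C X)) \<and>
     (\<forall>X\<in>obj C. \<forall>Y\<in>obj C. \<forall>Z\<in>obj C. \<forall>f \<in> hom C X Y. \<forall>g \<in> hom C Y Z.
        shM C (cmp C g f) = cmp C (shM C g) (shM C f)) \<and>
     (\<forall>X\<in>obj C. \<forall>Y\<in>obj C. \<forall>f \<in> hom C X Y. \<forall>g \<in> hom C X Y.
        shM C (pls C f g) = pls C (shM C f) (shM C g)) \<and>
     (\<forall>Y\<in>obj C. \<exists>X\<in>obj C. isomorphic C (shO C X) Y)"

definition is_triangle :: "('o,'m,'x) tricat_scheme \<Rightarrow> 'm \<times> 'm \<times> 'm \<Rightarrow> bool" where
  "is_triangle C t = (case t of (f, g, h) \<Rightarrow>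
     f \<in> mor C \<and> g \<in> mor C \<and> h \<in> mor C \<and> tgt C f = src C g \<and> tgt C g = src C h \<and>
     tgt C h = shO C (src C f))"

definition TR1 :: "('o,'m,'x) tricat_scheme \<Rightarrow> bool" where
  "TR1 C \<longleftrightarrow>
     (\<forall>f g h f' g' h' a b c. (f,g,h) \<in> dist C \<and> is_triangle C (f',g',h') \<and>
        a \<in> hom C (src C f) (src C f') \<and> b \<in> hom C (src C g) (src C g') \<and>
        c \<in> hom C (src C h) (src C h') \<and>
        is_iso_mor C a \<and> is_iso_mor C b \<and> is_iso_mor C c \<and>
        cmp C b f = cmp C f' a \<and> cmp C c g = cmp C g' b \<and> cmp C (shM C a) h = cmp C h' c
        \<longrightarrow> (f',g',h') \<in> dist C) \<and>
     (\<forall>X\<in>obj C. \<forall>Z. is_zero_obj C Z \<longrightarrow>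
        (idm C X, zro C X Z, zro C Z (shO C X)) \<in> dist C) \<and>
     (\<forall>f \<in> mor C. \<exists>g h. (f, g, h) \<in> dist C)"

definition TR2 :: "('o,'m,'x) tricat_scheme \<Rightarrow> bool" where
  "TR2 C \<longleftrightarrow> (\<forall>f g h. is_triangle C (f,g,h) \<longrightarrow>
     ((f,g,h) \<in> dist C \<longleftrightarrow> (g, h, ngt C (shM C f)) \<in> dist C))"

definition TR3 :: "('o,'m,'x) tricat_scheme \<Rightarrow> bool" where
  "TR3 C \<longleftrightarrow> (\<forall>f g h f' g' h' u v. (f,g,h) \<in> dist C \<and> (f',g',h') \<in> dist C \<and>
     u \<in> hom C (src C f) (src C f') \<and> v \<in> hom C (src C g) (src C g') \<and>
     cmp C v f = cmp C f' u \<longrightarrow>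
     (\<exists>w \<in> hom C (src C h) (src C h').
        cmp C w g = cmp C g' v \<and> cmp C (shM C u) h = cmp C h' w))"

text \<open>Octahedral axiom: u : X -> Y, v : Y -> Z, with distinguished triangles
  (u, j, k) on Z', (v, l, i) on X', (v u, m, n) on Y'.\<close>
definition TR4 :: "('o,'m,'x) tricat_scheme \<Rightarrow> bool" where
  "TR4 C \<longleftrightarrow> (\<forall>u v j k l i m n.
     (u, j, k) \<in> dist C \<and> (v, l, i) \<in> dist C \<and> (cmp C v u, m, n) \<in> dist C \<and>
     tgt C u = src C v \<longrightarrow>
     (\<exists>f \<in> hom C (src C k) (src C n). \<exists>g \<in> hom C (src C n) (src C i).
        (f, g, cmp C (shM C j) i) \<in> dist C \<and>
        cmp C m v = cmp C f j \<and> cmp C n f = k \<and> l = cmp C g m \<and>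
        cmp C (shM C u) n = cmp C i g))"

definition triangulated :: "('o,'m,'x) tricat_scheme \<Rightarrow> bool" where
  "triangulated C \<longleftrightarrow> is_additive C \<and> is_shift C \<and>
     (\<forall>t \<in> dist C. is_triangle C t) \<and> TR1 C \<and> TR2 C \<and> TR3 C \<and> TR4 C"

section \<open>Triangulated and dense subcategories (full subcategories = object sets)\<close>

definition triangulated_subcat :: "('o,'m,'x) tricat_scheme \<Rightarrow> 'o set \<Rightarrow> bool" where
  "triangulated_subcat C D \<longleftrightarrow> D \<subseteq> obj C \<and>
     (\<forall>X \<in> D. \<forall>Y. isomorphic C X Y \<longrightarrow> Y \<in> D) \<and>
     (\<forall>X \<in> obj C. X \<in> D \<longrightarrow> shO C X \<in> D) \<and>
     (\<forall>X \<in> obj C. shO C X \<in> D \<longrightarrow> X \<in> D) \<and>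
     (\<forall>f g h. (f,g,h) \<in> dist C \<and> src C f \<in> D \<and> tgt C f \<in> D \<longrightarrow> tgt C g \<in> D)"

definition dense_subcat :: "('o,'m,'x) tricat_scheme \<Rightarrow> 'o set \<Rightarrow> bool" where
  "dense_subcat C D \<longleftrightarrow> triangulated_subcat C D \<and>
     (\<forall>U \<in> obj C. \<exists>V \<in> obj C. \<exists>W \<in> D. is_biprod C U V W)"

text \<open>G(S)_Q, for a full triangulated subcategory with object set S, is realised as
  the Q-vector space Q^(S) (finitely supported functions) modulo the Q-span of the
  relations [X] - [Y] + [Z] for distinguished triangles in S and [X] - [X'] for
  isomorphic X, X' in S. This is (Z^(S)/relations) tensor Q, by right exactness.\<close>

definition delta :: "'o \<Rightarrow> 'o \<Rightarrow> rat" where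
  "delta a = (\<lambda>x. if x = a then 1 else 0)"

definition fvec :: "'o set \<Rightarrow> ('o \<Rightarrow> rat) set" where
  "fvec S = {v. finite {x. v x \<noteq> 0} \<and> (\<forall>x. v x \<noteq> 0 \<longrightarrow> x \<in> S)}"

inductive_set qspan :: "('o \<Rightarrow> rat) set \<Rightarrow> ('o \<Rightarrow> rat) set" for B where
  zero: "(\<lambda>_. 0) \<in> qspan B"
| gen: "b \<in> B \<Longrightarrow> b \<in> qspan B"
| add: "a \<in> qspan B \<Longrightarrow> b \<in> qspan B \<Longrightarrow> (\<lambda>x. a x + b x) \<in> qspan B"
| smult: "a \<in> qspan B \<Longrightarrow> (\<lambda>x. c * a x) \<in> qspan B"

definition relgens :: "('o,'m,'x) tricat_scheme \<Rightarrow> 'o set \<Rightarrow> ('o \<Rightarrow> rat) set" where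
  "relgens C S =
     {(\<lambda>x. delta (src C f) x - delta (tgt C f) x + delta (tgt C g) x) | f g h.
        (f,g,h) \<in> dist C \<and> src C f \<in> S \<and> tgt C f \<in> S \<and> tgt C g \<in> S}
   \<union> {(\<lambda>x. delta X x - delta Y x) | X Y. X \<in> S \<and> Y \<in> S \<and> isomorphic C X Y}"

definition cls :: "('o,'m,'x) tricat_scheme \<Rightarrow> 'o set \<Rightarrow> ('o \<Rightarrow> rat) \<Rightarrow> ('o \<Rightarrow> rat) set" where
  "cls C S v = {w \<in> fvec S. (\<lambda>x. w x - v x) \<in> qspan (relgens C S)}"

definition GQ :: "('o,'m,'x) tricat_scheme \<Rightarrow> 'o set \<Rightarrow> ('o \<Rightarrow> rat) set set" where
  "GQ C S = cls C S ` fvec S"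

definition rep :: "('o \<Rightarrow> rat) set \<Rightarrow> ('o \<Rightarrow> rat)" where
  "rep a = (SOME v. v \<in> a)"

definition GQ_subspace :: "('o,'m,'x) tricat_scheme \<Rightarrow> ('o \<Rightarrow> rat) set set \<Rightarrow> bool" where
  "GQ_subspace C H \<longleftrightarrow> H \<subseteq> GQ C (obj C) \<and>
     cls C (obj C) (\<lambda>_. 0) \<in> H \<and>
     (\<forall>a \<in> H. \<forall>b \<in> H. cls C (obj C) (\<lambda>x. rep a x + rep b x) \<in> H) \<and>
     (\<forall>a \<in> H. \<forall>c::rat. cls C (obj C) (\<lambda>x. c * rep a x) \<in> H)"

definition GQ_image :: "('o,'m,'x) tricat_scheme \<Rightarrow> 'o set \<Rightarrow> ('o \<Rightarrow> rat) set set" where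
  "GQ_image C D = (\<lambda>a. cls C (obj C) (rep a)) ` GQ C D"

definition I_H :: "('o,'m,'x) tricat_scheme \<Rightarrow> ('o \<Rightarrow> rat) set set \<Rightarrow> 'o set set" where
  "I_H C H = {D. dense_subcat C D \<and> GQ_image C D = H}"

end

theory Submission
  imports Defs
begin


context
  fixes C :: "('o,'m,'x) tricat_scheme"
  assumes PA: "is_preadditive C"
begin

lemma hom_D: "f \<in> hom C X Y \<Longrightarrow> f \<in> mor C \<and> src C f = X \<and> tgt C f = Y"
  by (simp add: hom_def)

lemma cat: "is_category C" using PA by (simp add: is_preadditive_def)

lemma cmp_hom: "X \<in> obj C \<Longrightarrow> Y \<in> obj C \<Longrightarrow> Z \<in> obj C \<Longrightarrow> f \<in> hom C X Y \<Longrightarrow> g \<in> hom C Y Z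
  \<Longrightarrow> cmp C g f \<in> hom C X Z"
  using cat unfolding is_category_def by blast

lemma idm_hom: "X \<in> obj C \<Longrightarrow> idm C X \<in> hom C X X"
  using cat unfolding is_category_def by blast

lemma assoc: "W \<in> obj C \<Longrightarrow> X \<in> obj C \<Longrightarrow> Y \<in> obj C \<Longrightarrow> Z \<in> obj C \<Longrightarrow>
  f \<in> hom C W X \<Longrightarrow> g \<in> hom C X Y \<Longrightarrow> h \<in> hom C Y Z \<Longrightarrow>
  cmp C h (cmp C g f) = cmp C (cmp C h g) f"
  using cat unfolding is_category_def by blast

lemma id_right: "X \<in> obj C \<Longrightarrow> Y \<in> obj C \<Longrightarrow> f \<in> hom C X Y \<Longrightarrow> cmp C f (idm C X) = f"
  using cat unfolding is_category_def by blast

lemma id_left: "X \<in> obj C \<Longrightarrow> Y \<in> obj C \<Longrightarrow> f \<in> hom C X Y \<Longrightarrow> cmp C (idm C Y) f = f"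
  using cat unfolding is_category_def by blast

lemma zro_hom: "X \<in> obj C \<Longrightarrow> Y \<in> obj C \<Longrightarrow> zro C X Y \<in> hom C X Y"
  using PA unfolding is_preadditive_def by blast

lemma ngt_hom: "X \<in> obj C \<Longrightarrow> Y \<in> obj C \<Longrightarrow> f \<in> hom C X Y \<Longrightarrow> ngt C f \<in> hom C X Y"
  using PA unfolding is_preadditive_def by blast

lemma add_zero: "X \<in> obj C \<Longrightarrow> Y \<in> obj C \<Longrightarrow> f \<in> hom C X Y \<Longrightarrow> pls C f (zro C X Y) = f"
  using PA unfolding is_preadditive_def by blast

lemma add_neg: "X \<in> obj C \<Longrightarrow> Y \<in> obj C \<Longrightarrow> f \<in> hom C X Y \<Longrightarrow> pls C f (ngt C f) = zro C X Y"
  using PA unfolding is_preadditive_def by blast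

lemma pls_hom: "X \<in> obj C \<Longrightarrow> Y \<in> obj C \<Longrightarrow> f \<in> hom C X Y \<Longrightarrow> g \<in> hom C X Y \<Longrightarrow> pls C f g \<in> hom C X Y"
  using PA unfolding is_preadditive_def by blast

lemma add_comm: "X \<in> obj C \<Longrightarrow> Y \<in> obj C \<Longrightarrow> f \<in> hom C X Y \<Longrightarrow> g \<in> hom C X Y \<Longrightarrow> pls C f g = pls C g f"
  using PA unfolding is_preadditive_def by blast

lemma add_assoc: "X \<in> obj C \<Longrightarrow> Y \<in> obj C \<Longrightarrow> f \<in> hom C X Y \<Longrightarrow> g \<in> hom C X Y \<Longrightarrow> h \<in> hom C X Y \<Longrightarrow>
  pls C (pls C f g) h = pls C f (pls C g h)"
  using PA unfolding is_preadditive_def by blast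

lemma distl: "X \<in> obj C \<Longrightarrow> Y \<in> obj C \<Longrightarrow> Z \<in> obj C \<Longrightarrow> f \<in> hom C X Y \<Longrightarrow> g \<in> hom C Y Z \<Longrightarrow> g' \<in> hom C Y Z \<Longrightarrow>
  cmp C (pls C g g') f = pls C (cmp C g f) (cmp C g' f)"
  using PA unfolding is_preadditive_def by blast

lemma distr: "X \<in> obj C \<Longrightarrow> Y \<in> obj C \<Longrightarrow> Z \<in> obj C \<Longrightarrow> f \<in> hom C X Y \<Longrightarrow> f' \<in> hom C X Y \<Longrightarrow> g \<in> hom C Y Z \<Longrightarrow>
  cmp C g (pls C f f') = pls C (cmp C g f) (cmp C g f')"
  using PA unfolding is_preadditive_def by blast

lemma zero_add: "X \<in> obj C \<Longrightarrow> Y \<in> obj C \<Longrightarrow> f \<in> hom C X Y \<Longrightarrow> pls C (zro C X Y) f = f"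
  using add_comm[of X Y "zro C X Y" f] add_zero[of X Y f] zro_hom[of X Y] by simp

lemma cancel_self: "X \<in> obj C \<Longrightarrow> Y \<in> obj C \<Longrightarrow> a \<in> hom C X Y \<Longrightarrow> pls C a a = a \<Longrightarrow> a = zro C X Y"
proof -
  assume o: "X \<in> obj C" "Y \<in> obj C" and a: "a \<in> hom C X Y" and e: "pls C a a = a"
  have "zro C X Y = pls C a (ngt C a)" using o a by (simp add: add_neg)
  also have "\<dots> = pls C (pls C a a) (ngt C a)" using e by simp
  also have "\<dots> = pls C a (pls C a (ngt C a))" using o a by (simp add: add_assoc ngt_hom)
  also have "\<dots> = a" using o a by (simp add: add_neg add_zero)
  finally show ?thesis by simp
qed

lemma inv_unique: "X \<in> obj C \<Longrightarrow> Y \<in> obj C \<Longrightarrow> a \<in> hom C X Y \<Longrightarrow> b \<in> hom C X Y \<Longrightarrow> pls C a b = zro C X Y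
  \<Longrightarrow> b = ngt C a"
proof -
  assume o: "X \<in> obj C" "Y \<in> obj C" and ab: "a \<in> hom C X Y" "b \<in> hom C X Y" and e: "pls C a b = zro C X Y"
  have "b = pls C b (pls C a (ngt C a))" using o ab by (simp add: add_neg add_zero)
  also have "\<dots> = pls C (pls C a b) (ngt C a)" using o ab
    using add_assoc[of X Y a b "ngt C a"] add_comm[of X Y a b] add_assoc[of X Y b a "ngt C a"] by (simp add: ngt_hom)
  also have "\<dots> = ngt C a" using o ab e by (simp add: zero_add ngt_hom)
  finally show ?thesis .
qed

lemma ngt_ngt: "X \<in> obj C \<Longrightarrow> Y \<in> obj C \<Longrightarrow> a \<in> hom C X Y \<Longrightarrow> ngt C (ngt C a) = a"
proof -
  assume o: "X \<in> obj C" "Y \<in> obj C" and a: "a \<in> hom C X Y"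
  have "pls C (ngt C a) a = zro C X Y" using o a add_comm[of X Y a "ngt C a"] by (simp add: add_neg ngt_hom)
  then show ?thesis using o a inv_unique[of X Y "ngt C a" a] by (simp add: ngt_hom)
qed

lemma minus_eq: "X \<in> obj C \<Longrightarrow> Y \<in> obj C \<Longrightarrow> a \<in> hom C X Y \<Longrightarrow> b \<in> hom C X Y \<Longrightarrow>
  pls C a (ngt C b) = zro C X Y \<Longrightarrow> a = b"
proof -
  assume o: "X \<in> obj C" "Y \<in> obj C" and a: "a \<in> hom C X Y" "b \<in> hom C X Y" and e: "pls C a (ngt C b) = zro C X Y"
  have "ngt C b = ngt C a" using inv_unique[OF o a(1) _ e] o a by (simp add: ngt_hom)
  then show ?thesis using ngt_ngt[OF o a(1)] ngt_ngt[OF o a(2)] by metis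
qed

lemma ngt_zero: "X \<in> obj C \<Longrightarrow> Y \<in> obj C \<Longrightarrow> ngt C (zro C X Y) = zro C X Y"
  using inv_unique[of X Y "zro C X Y" "zro C X Y"] add_zero[of X Y "zro C X Y"] zro_hom[of X Y] by simp

lemma zero_left: "X \<in> obj C \<Longrightarrow> Y \<in> obj C \<Longrightarrow> Z \<in> obj C \<Longrightarrow> f \<in> hom C X Y \<Longrightarrow> cmp C (zro C Y Z) f = zro C X Z"
proof -
  assume o: "X \<in> obj C" "Y \<in> obj C" "Z \<in> obj C" and f: "f \<in> hom C X Y"
  have "cmp C (zro C Y Z) f = cmp C (pls C (zro C Y Z) (zro C Y Z)) f" using o by (simp add: add_zero zro_hom)
  also have "\<dots> = pls C (cmp C (zro C Y Z) f) (cmp C (zro C Y Z) f)" using o f by (simp add: distl zro_hom)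
  finally show ?thesis using cancel_self[of X Z "cmp C (zro C Y Z) f"] o f by (simp add: cmp_hom zro_hom)
qed

lemma zero_right: "X \<in> obj C \<Longrightarrow> Y \<in> obj C \<Longrightarrow> Z \<in> obj C \<Longrightarrow> g \<in> hom C Y Z \<Longrightarrow> cmp C g (zro C X Y) = zro C X Z"
proof -
  assume o: "X \<in> obj C" "Y \<in> obj C" "Z \<in> obj C" and g: "g \<in> hom C Y Z"
  have "cmp C g (zro C X Y) = cmp C g (pls C (zro C X Y) (zro C X Y))" using o by (simp add: add_zero zro_hom)
  also have "\<dots> = pls C (cmp C g (zro C X Y)) (cmp C g (zro C X Y))" using o g by (simp add: distr zro_hom)
  finally show ?thesis using cancel_self[of X Z "cmp C g (zro C X Y)"] o g by (simp add: cmp_hom zro_hom)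
qed

lemma neg_cmp_left: "X \<in> obj C \<Longrightarrow> Y \<in> obj C \<Longrightarrow> Z \<in> obj C \<Longrightarrow> f \<in> hom C X Y \<Longrightarrow> g \<in> hom C Y Z \<Longrightarrow>
  cmp C (ngt C g) f = ngt C (cmp C g f)"
proof -
  assume a: "X \<in> obj C" "Y \<in> obj C" "Z \<in> obj C" "f \<in> hom C X Y" "g \<in> hom C Y Z"
  have "pls C (cmp C g f) (cmp C (ngt C g) f) = cmp C (pls C g (ngt C g)) f"
    using a by (simp add: distl ngt_hom)
  also have "\<dots> = zro C X Z" using a by (simp add: add_neg zero_left)
  finally show ?thesis using a by (meson cmp_hom inv_unique ngt_hom)
qed

lemma neg_cmp_right: "X \<in> obj C \<Longrightarrow> Y \<in> obj C \<Longrightarrow> Z \<in> obj C \<Longrightarrow> f \<in> hom C X Y \<Longrightarrow> g \<in> hom C Y Z \<Longrightarrow>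
  cmp C g (ngt C f) = ngt C (cmp C g f)"
proof -
  assume a: "X \<in> obj C" "Y \<in> obj C" "Z \<in> obj C" "f \<in> hom C X Y" "g \<in> hom C Y Z"
  have "pls C (cmp C g f) (cmp C g (ngt C f)) = cmp C g (pls C f (ngt C f))"
    using a by (simp add: distr ngt_hom)
  also have "\<dots> = zro C X Z" using a by (simp add: add_neg zero_right)
  finally show ?thesis using a by (meson cmp_hom inv_unique ngt_hom)
qed

end



context
  fixes C :: "('o,'m,'x) tricat_scheme"
  assumes TC: "triangulated C"
begin

lemma PA: "is_preadditive C" using TC by (simp add: triangulated_def is_additive_def)
lemma SH: "is_shift C" using TC by (simp add: triangulated_def)

lemmas pa = hom_D[OF PA] cmp_hom[OF PA] idm_hom[OF PA] zro_hom[OF PA] ngt_hom[OF PA] pls_hom[OF PA]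
  id_left[OF PA] id_right[OF PA] add_zero[OF PA] zero_add[OF PA] add_neg[OF PA]
  zero_left[OF PA] zero_right[OF PA] ngt_zero[OF PA]

lemma zro_st: "X \<in> obj C \<Longrightarrow> Y \<in> obj C \<Longrightarrow> zro C X Y \<in> mor C \<and> src C (zro C X Y) = X \<and> tgt C (zro C X Y) = Y"
  using zro_hom[OF PA] by (simp add: hom_def)
lemma idm_st: "X \<in> obj C \<Longrightarrow> idm C X \<in> mor C \<and> src C (idm C X) = X \<and> tgt C (idm C X) = X"
  using idm_hom[OF PA] by (simp add: hom_def)

lemma obj_src_tgt: "f \<in> mor C \<Longrightarrow> src C f \<in> obj C \<and> tgt C f \<in> obj C"
  using cat[OF PA] unfolding is_category_def by blast

lemma mor_hom: "f \<in> mor C \<Longrightarrow> f \<in> hom C (src C f) (tgt C f)"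
  by (simp add: hom_def)

lemma shO_obj: "X \<in> obj C \<Longrightarrow> shO C X \<in> obj C"
  using SH unfolding is_shift_def by blast

lemma shM_hom: "X \<in> obj C \<Longrightarrow> Y \<in> obj C \<Longrightarrow> f \<in> hom C X Y \<Longrightarrow> shM C f \<in> hom C (shO C X) (shO C Y)"
  using SH unfolding is_shift_def bij_betw_def by blast

lemma shM_idm: "X \<in> obj C \<Longrightarrow> shM C (idm C X) = idm C (shO C X)"
  using SH unfolding is_shift_def by blast

lemma shM_pls: "X \<in> obj C \<Longrightarrow> Y \<in> obj C \<Longrightarrow> f \<in> hom C X Y \<Longrightarrow> g \<in> hom C X Y \<Longrightarrow>
  shM C (pls C f g) = pls C (shM C f) (shM C g)"
  using SH unfolding is_shift_def by blast

lemma shM_zro: "X \<in> obj C \<Longrightarrow> Y \<in> obj C \<Longrightarrow> shM C (zro C X Y) = zro C (shO C X) (shO C Y)"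
proof -
  assume o: "X \<in> obj C" "Y \<in> obj C"
  have z: "zro C X Y \<in> hom C X Y" using o by (simp add: pa)
  have "shM C (zro C X Y) = shM C (pls C (zro C X Y) (zro C X Y))" using o z add_zero[OF PA] by simp
  also have "\<dots> = pls C (shM C (zro C X Y)) (shM C (zro C X Y))" using shM_pls[OF o z z] .
  finally show ?thesis using cancel_self[OF PA, of "shO C X" "shO C Y" "shM C (zro C X Y)"] o
    by (simp add: pa shO_obj shM_hom)
qed

lemma zero_obj_sh: "is_zero_obj C Z \<Longrightarrow> is_zero_obj C (shO C Z)"
  unfolding is_zero_obj_def using shM_idm shM_zro shO_obj by metis

lemma ex_zero: "\<exists>Z. is_zero_obj C Z"
  using TC by (simp add: triangulated_def is_additive_def)

lemma zero_obj: "is_zero_obj C Z \<Longrightarrow> Z \<in> obj C"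
  by (simp add: is_zero_obj_def)

lemma dist_tri: "(f,g,h) \<in> dist C \<Longrightarrow> is_triangle C (f,g,h)"
  using TC by (simp add: triangulated_def)

lemma dist_D: assumes "(f,g,h) \<in> dist C"
  shows "src C f \<in> obj C" "tgt C f \<in> obj C" "tgt C g \<in> obj C"
    "f \<in> hom C (src C f) (tgt C f)" "g \<in> hom C (tgt C f) (tgt C g)"
    "h \<in> hom C (tgt C g) (shO C (src C f))" "src C g = tgt C f" "src C h = tgt C g"
    "tgt C h = shO C (src C f)"
  using dist_tri[OF assms] obj_src_tgt unfolding is_triangle_def hom_def by auto

lemma TR1a: "X \<in> obj C \<Longrightarrow> is_zero_obj C Z \<Longrightarrow> (idm C X, zro C X Z, zro C Z (shO C X)) \<in> dist C"
  using TC unfolding triangulated_def TR1_def by blast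

lemma TR1c: "f \<in> mor C \<Longrightarrow> \<exists>g h. (f, g, h) \<in> dist C"
  using TC unfolding triangulated_def TR1_def by blast

lemma rot: assumes "(f,g,h) \<in> dist C" shows "(g, h, ngt C (shM C f)) \<in> dist C"
  using TC dist_tri[OF assms] assms unfolding triangulated_def TR2_def by blast

lemma TR3': "(f,g,h) \<in> dist C \<Longrightarrow> (f',g',h') \<in> dist C \<Longrightarrow>
     u \<in> hom C (src C f) (src C f') \<Longrightarrow> v \<in> hom C (src C g) (src C g') \<Longrightarrow>
     cmp C v f = cmp C f' u \<Longrightarrow>
     (\<exists>w \<in> hom C (src C h) (src C h').
        cmp C w g = cmp C g' v \<and> cmp C (shM C u) h = cmp C h' w)"
  using TC unfolding triangulated_def TR3_def by blast

lemma SV: assumes V: "V \<in> obj C" and Z: "is_zero_obj C Z"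
  shows "(zro C Z V, idm C V, zro C V (shO C Z)) \<in> dist C"
proof -
  have o: "Z \<in> obj C" "shO C Z \<in> obj C" using Z zero_obj shO_obj by auto
  have tri: "is_triangle C (zro C Z V, idm C V, zro C V (shO C Z))"
    using o V unfolding is_triangle_def by (simp add: zro_st idm_st)
  have "(idm C V, zro C V (shO C Z), zro C (shO C Z) (shO C V)) \<in> dist C"
    using TR1a[OF V zero_obj_sh[OF Z]] .
  moreover have "ngt C (shM C (zro C Z V)) = zro C (shO C Z) (shO C V)"
    using o V by (simp add: shM_zro pa shO_obj)
  ultimately show ?thesis using TC tri unfolding triangulated_def TR2_def by auto
qed

lemma comp_zero: assumes T: "(f,g,h) \<in> dist C"
  shows "cmp C g f = zro C (src C f) (tgt C g)"
proof -
  obtain Z where Z: "is_zero_obj C Z" using ex_zero by blast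
  have zo: "Z \<in> obj C" using Z zero_obj by auto
  let ?X = "src C f"
  have S: "(idm C ?X, zro C ?X Z, zro C Z (shO C ?X)) \<in> dist C" using TR1a[OF dist_D(1)[OF T] Z] .
  have sid: "src C (idm C ?X) = ?X" "src C (zro C ?X Z) = ?X" "src C (zro C Z (shO C ?X)) = Z"
    using dist_D[OF T] zo by (simp_all add: zro_st idm_st shO_obj)
  have u: "idm C ?X \<in> hom C (src C (idm C ?X)) (src C f)" using sid dist_D[OF T] pa(3) by simp
  have v: "f \<in> hom C (src C (zro C ?X Z)) (src C g)" using sid dist_D[OF T] by simp
  obtain w where w: "w \<in> hom C (src C (zro C Z (shO C ?X))) (src C h)" "cmp C w (zro C ?X Z) = cmp C g f"
    using TR3'[OF S T u v refl] by blast
  have w': "w \<in> hom C Z (tgt C g)" using w(1) sid dist_D[OF T] by simp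
  show ?thesis using w(2) zero_right[OF PA dist_D(1)[OF T] zo dist_D(3)[OF T] w'] by simp
qed

lemma EX: assumes T: "(f,g,h) \<in> dist C" and V: "V \<in> obj C"
  and a: "a \<in> hom C (tgt C f) V" and af: "cmp C a f = zro C (src C f) V"
  shows "\<exists>c \<in> hom C (tgt C g) V. cmp C c g = a"
proof -
  obtain Z where Z: "is_zero_obj C Z" using ex_zero by blast
  have zo: "Z \<in> obj C" using Z zero_obj by auto
  have S: "(zro C Z V, idm C V, zro C V (shO C Z)) \<in> dist C" using SV[OF V Z] .
  have sid: "src C (zro C Z V) = Z" "src C (idm C V) = V" "src C (zro C V (shO C Z)) = V"
    using V zo by (simp_all add: zro_st idm_st shO_obj)
  have "cmp C (zro C Z V) (zro C (src C f) Z) = zro C (src C f) V"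
    using zero_left[OF PA dist_D(1)[OF T] zo V zro_hom[OF PA dist_D(1)[OF T] zo]] .
  note D = dist_D[OF T]
  have u: "zro C (src C f) Z \<in> hom C (src C f) (src C (zro C Z V))" using sid D zo pa(4) by simp
  have v: "a \<in> hom C (src C g) (src C (idm C V))" using sid D a by simp
  have c: "cmp C a f = cmp C (zro C Z V) (zro C (src C f) Z)" using af
    \<open>cmp C (zro C Z V) (zro C (src C f) Z) = zro C (src C f) V\<close> by simp
  obtain w where w: "w \<in> hom C (src C h) (src C (zro C V (shO C Z)))" "cmp C w g = cmp C (idm C V) a"
    using TR3'[OF T S u v c] by blast
  have "cmp C (idm C V) a = a" using id_left[OF PA D(2) V a] .
  then have "cmp C w g = a" using w(2) by simp
  moreover have "w \<in> hom C (tgt C g) V" using w(1) sid D(8) by simp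
  ultimately show ?thesis by blast
qed

end


lemma biprod_cone:
  fixes C :: "('o,'m,'x) tricat_scheme"
  assumes TC: "triangulated C" and U: "U \<in> obj C" and T: "(zro C U U, g, h) \<in> dist C"
  shows "is_biprod C U (shO C U) (tgt C g)"
proof -
  note PA = PA[OF TC]
  define Z where "Z = tgt C g"
  define S where "S = shO C U"
  note D = dist_D[OF TC T]
  have f_st: "src C (zro C U U) = U" "tgt C (zro C U U) = U" using zro_st[OF TC U U] by auto
  have Z: "Z \<in> obj C" using D(3) Z_def by simp
  have S: "S \<in> obj C" using shO_obj[OF TC U] S_def by simp
  have g: "g \<in> hom C U Z" using D(5) f_st Z_def by simp
  have h: "h \<in> hom C Z S" using D(6) f_st Z_def S_def by simp
  have hs: "src C h = Z" "tgt C h = S" using h by (auto simp: hom_def)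
  have gs: "src C g = U" "tgt C g = Z" using g by (auto simp: hom_def)
  have idU: "idm C U \<in> hom C U U" using idm_hom[OF PA U] .
  have idZ: "idm C Z \<in> hom C Z Z" using idm_hom[OF PA Z] .
  have idS: "idm C S \<in> hom C S S" using idm_hom[OF PA S] .
  have "cmp C (idm C U) (zro C U U) = zro C U U" using id_left[OF PA U U zro_hom[OF PA U U]] .
  then obtain p where p: "p \<in> hom C Z U" "cmp C p g = idm C U"
    using EX[OF TC T U, of "idm C U"] f_st idU Z_def by auto
  have gp: "cmp C g p \<in> hom C Z Z" using cmp_hom[OF PA Z U Z p(1) g] .
  have ngp: "ngt C (cmp C g p) \<in> hom C Z Z" using ngt_hom[OF PA Z Z gp] .
  have nz: "ngt C (shM C (zro C U U)) = zro C S S"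
    using shM_zro[OF TC U U] ngt_zero[OF PA S S] S_def by simp
  have T1: "(g, h, zro C S S) \<in> dist C" using rot[OF TC T] nz by simp
  have T2: "(h, zro C S S, ngt C (shM C g)) \<in> dist C" using rot[OF TC T1] .
  have hg: "cmp C h g = zro C U S" using comp_zero[OF TC T1] gs hs by simp
  define a where "a = pls C (idm C Z) (ngt C (cmp C g p))"
  have a: "a \<in> hom C Z Z" using pls_hom[OF PA Z Z idZ ngp] a_def by simp
  have "cmp C a g = pls C (cmp C (idm C Z) g) (cmp C (ngt C (cmp C g p)) g)"
    using distl[OF PA U Z Z g idZ ngp] a_def by simp
  also have "cmp C (idm C Z) g = g" using id_left[OF PA U Z g] .
  also have "cmp C (ngt C (cmp C g p)) g = ngt C (cmp C (cmp C g p) g)"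
    using neg_cmp_left[OF PA U Z Z g gp] .
  also have "cmp C (cmp C g p) g = cmp C g (cmp C p g)" using assoc[OF PA U Z U Z g p(1) g] by simp
  also have "\<dots> = g" using p(2) id_right[OF PA U Z g] by simp
  finally have ag: "cmp C a g = zro C U Z" using add_neg[OF PA U Z g] by simp
  obtain i2 where i2: "i2 \<in> hom C S Z" "cmp C i2 h = a"
    using EX[OF TC T1 Z, of a] gs hs a ag by auto
  have canc: "b = zro C S V" if V: "V \<in> obj C" and b: "b \<in> hom C S V" and bh: "cmp C b h = zro C Z V" for b V
  proof -
    have zs: "src C (zro C S S) = S" "tgt C (zro C S S) = S" using zro_st[OF TC S S] by auto
    obtain c where c: "c \<in> hom C S V" "cmp C c (zro C S S) = b"
      using EX[OF TC T2 V, of b] zs hs b bh by auto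
    show ?thesis using c(2) zero_right[OF PA S S V c(1)] by simp
  qed
  have hi2: "cmp C h i2 \<in> hom C S S" using cmp_hom[OF PA S Z S i2(1) h] .
  have ha: "cmp C h a = h"
  proof -
    have "cmp C h a = pls C (cmp C h (idm C Z)) (cmp C h (ngt C (cmp C g p)))"
      using distr[OF PA Z Z S idZ ngp h] a_def by simp
    also have "cmp C h (idm C Z) = h" using id_right[OF PA Z S h] .
    also have "cmp C h (ngt C (cmp C g p)) = ngt C (cmp C h (cmp C g p))"
      using neg_cmp_right[OF PA Z Z S gp h] .
    also have "cmp C h (cmp C g p) = cmp C (cmp C h g) p" using assoc[OF PA Z U Z S p(1) g h] .
    also have "\<dots> = zro C Z S" using hg zero_left[OF PA Z U S p(1)] by simp
    finally show ?thesis using ngt_zero[OF PA Z S] add_zero[OF PA Z S h] by simp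
  qed
  have hi2_id: "cmp C h i2 = idm C S"
  proof -
    define b where "b = pls C (cmp C h i2) (ngt C (idm C S))"
    have nidS: "ngt C (idm C S) \<in> hom C S S" using ngt_hom[OF PA S S idS] .
    have b: "b \<in> hom C S S" using pls_hom[OF PA S S hi2 nidS] b_def by simp
    have "cmp C b h = pls C (cmp C (cmp C h i2) h) (cmp C (ngt C (idm C S)) h)"
      using distl[OF PA Z S S h hi2 nidS] b_def by simp
    also have "cmp C (cmp C h i2) h = cmp C h (cmp C i2 h)" using assoc[OF PA Z S Z S h i2(1) h] by simp
    also have "\<dots> = h" using i2(2) ha by simp
    also have "cmp C (ngt C (idm C S)) h = ngt C (cmp C (idm C S) h)" using neg_cmp_left[OF PA Z S S h idS] .
    also have "cmp C (idm C S) h = h" using id_left[OF PA Z S h] .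
    finally have "cmp C b h = zro C Z S" using add_neg[OF PA Z S h] by simp
    then have "b = zro C S S" using canc[OF S b] by simp
    then show ?thesis using minus_eq[OF PA S S hi2 idS] b_def by simp
  qed
  have pi2: "cmp C p i2 = zro C S U"
  proof -
    have pi: "cmp C p i2 \<in> hom C S U" using cmp_hom[OF PA S Z U i2(1) p(1)] .
    have "cmp C (cmp C p i2) h = cmp C p (cmp C i2 h)" using assoc[OF PA Z S Z U h i2(1) p(1)] by simp
    also have "\<dots> = cmp C p a" using i2(2) by simp
    also have "\<dots> = pls C (cmp C p (idm C Z)) (cmp C p (ngt C (cmp C g p)))"
      using distr[OF PA Z Z U idZ ngp p(1)] a_def by simp
    also have "cmp C p (idm C Z) = p" using id_right[OF PA Z U p(1)] .
    also have "cmp C p (ngt C (cmp C g p)) = ngt C (cmp C p (cmp C g p))"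
      using neg_cmp_right[OF PA Z Z U gp p(1)] .
    also have "cmp C p (cmp C g p) = cmp C (cmp C p g) p" using assoc[OF PA Z U Z U p(1) g p(1)] .
    also have "\<dots> = p" using p(2) id_left[OF PA Z U p(1)] by simp
    finally have "cmp C (cmp C p i2) h = zro C Z U" using add_neg[OF PA Z U p(1)] by simp
    then show ?thesis using canc[OF U pi] by simp
  qed
  have sum: "pls C (cmp C g p) (cmp C i2 h) = idm C Z"
  proof -
    have "pls C (cmp C g p) (cmp C i2 h) = pls C (cmp C g p) (pls C (ngt C (cmp C g p)) (idm C Z))"
      using i2(2) a_def add_comm[OF PA Z Z idZ ngp] by simp
    also have "\<dots> = pls C (pls C (cmp C g p) (ngt C (cmp C g p))) (idm C Z)"
      using add_assoc[OF PA Z Z gp ngp idZ] by simp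
    also have "\<dots> = idm C Z" using add_neg[OF PA Z Z gp] zero_add[OF PA Z Z idZ] by simp
    finally show ?thesis .
  qed
  have "Z \<in> obj C \<and> (\<exists>i1 \<in> hom C U Z. \<exists>i2 \<in> hom C S Z. \<exists>p1 \<in> hom C Z U. \<exists>p2 \<in> hom C Z S.
        cmp C p1 i1 = idm C U \<and> cmp C p2 i2 = idm C S \<and>
        cmp C p1 i2 = zro C S U \<and> cmp C p2 i1 = zro C U S \<and>
        pls C (cmp C i1 p1) (cmp C i2 p2) = idm C Z)"
    using Z g i2(1) p(1) h p(2) hi2_id pi2 hg sum by blast
  then show ?thesis unfolding is_biprod_def Z_def S_def .
qed



lemma fvec_zero: "(\<lambda>_. 0) \<in> fvec S" by (simp add: fvec_def)

lemma fvec_add: "a \<in> fvec S \<Longrightarrow> b \<in> fvec S \<Longrightarrow> (\<lambda>x. a x + b x) \<in> fvec S"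
proof -
  assume a: "a \<in> fvec S" and b: "b \<in> fvec S"
  have "{x. a x + b x \<noteq> 0} \<subseteq> {x. a x \<noteq> 0} \<union> {x. b x \<noteq> 0}" by auto
  moreover have "finite ({x. a x \<noteq> 0} \<union> {x. b x \<noteq> 0})" using a b unfolding fvec_def by simp
  ultimately have "finite {x. a x + b x \<noteq> 0}" by (rule finite_subset)
  moreover have "\<forall>x. a x + b x \<noteq> 0 \<longrightarrow> x \<in> S"
  proof (intro allI impI)
    fix x assume "a x + b x \<noteq> 0"
    then have "a x \<noteq> 0 \<or> b x \<noteq> 0" by auto
    then show "x \<in> S" using a b unfolding fvec_def by blast
  qed
  ultimately show ?thesis unfolding fvec_def by blast
qed

lemma fvec_smult: "a \<in> fvec S \<Longrightarrow> (\<lambda>x. c * a x) \<in> fvec S"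
proof -
  assume a: "a \<in> fvec S"
  have "{x. c * a x \<noteq> 0} \<subseteq> {x. a x \<noteq> 0}" by auto
  moreover have "finite {x. a x \<noteq> 0}" using a unfolding fvec_def by simp
  ultimately have "finite {x. c * a x \<noteq> 0}" by (rule finite_subset)
  moreover have "\<forall>x. c * a x \<noteq> 0 \<longrightarrow> x \<in> S" using a unfolding fvec_def by auto
  ultimately show ?thesis unfolding fvec_def by blast
qed

lemma fvec_delta: "X \<in> S \<Longrightarrow> delta X \<in> fvec S"
proof -
  assume "X \<in> S"
  moreover have "{x. delta X x \<noteq> 0} \<subseteq> {X}" by (auto simp: delta_def split: if_splits)
  moreover have "finite {x. delta X x \<noteq> 0}" using \<open>{x. delta X x \<noteq> 0} \<subseteq> {X}\<close> finite_subset by blast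
  moreover have "\<forall>x. delta X x \<noteq> 0 \<longrightarrow> x \<in> S" using \<open>X \<in> S\<close> by (simp add: delta_def)
  ultimately show ?thesis unfolding fvec_def by blast
qed

lemma fvec_mono: "S \<subseteq> T \<Longrightarrow> fvec S \<subseteq> fvec T" unfolding fvec_def by auto

lemma relgens_fvec: "relgens C S \<subseteq> fvec S"
proof
  fix r assume "r \<in> relgens C S"
  then show "r \<in> fvec S"
  proof (unfold relgens_def, elim UnE CollectE exE conjE)
    fix f g h assume r: "r = (\<lambda>x. delta (src C f) x - delta (tgt C f) x + delta (tgt C g) x)"
      and s: "src C f \<in> S" "tgt C f \<in> S" "tgt C g \<in> S"
    have "(\<lambda>x. delta (src C f) x + (-1) * delta (tgt C f) x) \<in> fvec S"
      using fvec_add[OF fvec_delta[OF s(1)] fvec_smult[OF fvec_delta[OF s(2)]]] .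
    from fvec_add[OF this fvec_delta[OF s(3)]] show ?thesis using r by simp
  next
    fix X Y assume r: "r = (\<lambda>x. delta X x - delta Y x)" and s: "X \<in> S" "Y \<in> S"
    from fvec_add[OF fvec_delta[OF s(1)] fvec_smult[OF fvec_delta[OF s(2)]], of "-1"]
    show ?thesis using r by simp
  qed
qed

lemma qspan_fvec: "B \<subseteq> fvec S \<Longrightarrow> qspan B \<subseteq> fvec S"
proof
  fix a assume B: "B \<subseteq> fvec S" and a: "a \<in> qspan B"
  from a show "a \<in> fvec S"
  proof (induction rule: qspan.induct)
    case zero then show ?case by (rule fvec_zero)
  next
    case (gen b) then show ?case using B by blast
  next
    case (add a b) show ?case using add.IH by (rule fvec_add)
  next
    case (smult a c) show ?case using smult.IH by (rule fvec_smult)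
  qed
qed

lemma qspan_mono: "B \<subseteq> B' \<Longrightarrow> qspan B \<subseteq> qspan B'"
proof
  fix a assume B: "B \<subseteq> B'" and a: "a \<in> qspan B"
  from a show "a \<in> qspan B'"
  proof (induction rule: qspan.induct)
    case zero then show ?case by (rule qspan.zero)
  next
    case (gen b) then show ?case using B qspan.gen by blast
  next
    case (add a b) show ?case using add.IH by (rule qspan.add)
  next
    case (smult a c) show ?case using smult.IH by (rule qspan.smult)
  qed
qed

lemma relgens_mono: "S \<subseteq> T \<Longrightarrow> relgens C S \<subseteq> relgens C T"
  unfolding relgens_def by blast

lemma qspan_lin: "a \<in> qspan B \<Longrightarrow> b \<in> qspan B \<Longrightarrow> (\<lambda>x. c * a x + d * b x) \<in> qspan B"
  using qspan.add[OF qspan.smult[of a B c] qspan.smult[of b B d]] by simp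

definition eqv :: "('o \<Rightarrow> rat) set \<Rightarrow> ('o \<Rightarrow> rat) \<Rightarrow> ('o \<Rightarrow> rat) \<Rightarrow> bool" where
  "eqv B v w \<longleftrightarrow> (\<lambda>x. v x - w x) \<in> qspan B"

lemma eqv_refl: "eqv B v v" unfolding eqv_def using qspan.zero by simp

lemma eqv_sym: "eqv B v w \<Longrightarrow> eqv B w v"
  unfolding eqv_def using qspan.smult[of _ B "-1"] by fastforce

lemma eqv_trans: "eqv B u v \<Longrightarrow> eqv B v w \<Longrightarrow> eqv B u w"
  unfolding eqv_def using qspan.add by fastforce

lemma eqv_add: "eqv B a b \<Longrightarrow> eqv B c d \<Longrightarrow> eqv B (\<lambda>x. a x + c x) (\<lambda>x. b x + d x)"
  unfolding eqv_def using qspan.add[of "\<lambda>x. a x - b x" B "\<lambda>x. c x - d x"]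
  by (simp add: algebra_simps)

lemma eqv_smult: "eqv B a b \<Longrightarrow> eqv B (\<lambda>x. c * a x) (\<lambda>x. c * b x)"
  unfolding eqv_def using qspan.smult[of "\<lambda>x. a x - b x" B c]
  by (simp add: algebra_simps)

lemma eqv_mono: "eqv B a b \<Longrightarrow> B \<subseteq> B' \<Longrightarrow> eqv B' a b"
  unfolding eqv_def using qspan_mono by blast

lemma cls_self: "v \<in> fvec S \<Longrightarrow> v \<in> cls C S v"
  unfolding cls_def using qspan.zero by simp

lemma cls_eq_iff: "v \<in> fvec S \<Longrightarrow> w \<in> fvec S \<Longrightarrow> cls C S v = cls C S w \<longleftrightarrow> eqv (relgens C S) v w"
proof
  assume v: "v \<in> fvec S" and w: "w \<in> fvec S"
  { assume "cls C S v = cls C S w"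
    then have "v \<in> cls C S w" using cls_self[OF v, of C] by simp
    then show "eqv (relgens C S) v w" unfolding cls_def eqv_def by simp }
  { assume e: "eqv (relgens C S) v w"
    show "cls C S v = cls C S w"
      unfolding cls_def using e eqv_trans eqv_sym unfolding eqv_def[symmetric] by blast }
qed

lemma rep_cls: "v \<in> fvec S \<Longrightarrow> rep (cls C S v) \<in> cls C S v"
  unfolding rep_def using cls_self by (metis someI)

lemma rep_cls_eqv: "v \<in> fvec S \<Longrightarrow> rep (cls C S v) \<in> fvec S \<and> eqv (relgens C S) (rep (cls C S v)) v"
  using rep_cls[of v S C] unfolding cls_def eqv_def by simp

lemma GQ_image_eq:
  assumes D: "D \<subseteq> obj C"
  shows "GQ_image C D = cls C (obj C) ` fvec D"
proof -
  have "cls C (obj C) (rep (cls C D v)) = cls C (obj C) v" if v: "v \<in> fvec D" for v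
  proof -
    have r: "rep (cls C D v) \<in> fvec D" "eqv (relgens C D) (rep (cls C D v)) v" using rep_cls_eqv[OF v] by auto
    have "eqv (relgens C (obj C)) (rep (cls C D v)) v" using eqv_mono[OF r(2) relgens_mono[OF D]] .
    then show ?thesis using cls_eq_iff r(1) v fvec_mono[OF D] by blast
  qed
  then show ?thesis unfolding GQ_image_def GQ_def image_image by (simp cong: image_cong)
qed



lemma eqv_fun: "eqv B a b \<Longrightarrow> a = a' \<Longrightarrow> b = b' \<Longrightarrow> eqv B a' b'" by simp

context
  fixes C :: "('o,'m,'x) tricat_scheme"
  assumes TC: "triangulated C"
begin

abbreviation "KK \<equiv> relgens C (obj C)"

lemma R_tri: assumes T: "(f,g,h) \<in> dist C"
  shows "eqv KK (\<lambda>x. delta (src C f) x + delta (tgt C g) x) (delta (tgt C f))"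
proof -
  note D = dist_D[OF TC T]
  have "(\<lambda>x. delta (src C f) x - delta (tgt C f) x + delta (tgt C g) x) \<in> KK"
    unfolding relgens_def
  proof (rule UnI1, rule CollectI, intro exI conjI)
    show "(\<lambda>x. delta (src C f) x - delta (tgt C f) x + delta (tgt C g) x) = (\<lambda>x. delta (src C f) x - delta (tgt C f) x + delta (tgt C g) x)" by (rule refl)
  qed (use T D(1-3) in auto)
  then have "(\<lambda>x. delta (src C f) x - delta (tgt C f) x + delta (tgt C g) x) \<in> qspan KK" by (rule qspan.gen)
  moreover have "(\<lambda>x. delta (src C f) x - delta (tgt C f) x + delta (tgt C g) x) =
     (\<lambda>x. (delta (src C f) x + delta (tgt C g) x) - delta (tgt C f) x)" by (rule ext) simp
  ultimately show ?thesis unfolding eqv_def by simp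
qed

lemma R_iso: assumes "isomorphic C X Y" shows "eqv KK (delta X) (delta Y)"
proof -
  have "(\<lambda>x. delta X x - delta Y x) \<in> KK" unfolding relgens_def
  proof (rule UnI2, rule CollectI, intro exI conjI)
    show "(\<lambda>x. delta X x - delta Y x) = (\<lambda>x. delta X x - delta Y x)" by (rule refl)
  qed (use assms in \<open>auto simp: isomorphic_def\<close>)
  then show ?thesis unfolding eqv_def by (rule qspan.gen)
qed

lemma R_zero: assumes Z: "is_zero_obj C Z" shows "eqv KK (delta Z) (\<lambda>_. 0)"
proof -
  have zo: "Z \<in> obj C" using zero_obj[OF TC Z] .
  have T: "(idm C Z, zro C Z Z, zro C Z (shO C Z)) \<in> dist C" using TR1a[OF TC zo Z] .
  have s: "src C (idm C Z) = Z" "tgt C (idm C Z) = Z" "tgt C (zro C Z Z) = Z"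
    using idm_st[OF TC zo] zro_st[OF TC zo zo] by auto
  have "eqv KK (\<lambda>x. delta Z x + delta Z x) (delta Z)" using R_tri[OF T] s by simp
  from eqv_add[OF this eqv_refl[of KK "\<lambda>x. - delta Z x"]]
  show ?thesis by (rule eqv_fun) auto
qed

lemma R_shift: assumes X: "X \<in> obj C" shows "eqv KK (\<lambda>x. delta X x + delta (shO C X) x) (\<lambda>_. 0)"
proof -
  obtain Z where Z: "is_zero_obj C Z" using ex_zero[OF TC] by blast
  have zo: "Z \<in> obj C" using zero_obj[OF TC Z] .
  have T: "(zro C X Z, zro C Z (shO C X), ngt C (shM C (idm C X))) \<in> dist C" using rot[OF TC TR1a[OF TC X Z]] .
  have s: "src C (zro C X Z) = X" "tgt C (zro C X Z) = Z" "tgt C (zro C Z (shO C X)) = shO C X"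
    using zro_st[OF TC X zo] zro_st[OF TC zo shO_obj[OF TC X]] by auto
  have "eqv KK (\<lambda>x. delta X x + delta (shO C X) x) (delta Z)" using R_tri[OF T] s by simp
  then show ?thesis using R_zero[OF Z] eqv_trans by blast
qed

lemma R_shift': assumes X: "X \<in> obj C" shows "eqv KK (delta (shO C X)) (\<lambda>x. - delta X x)"
proof -
  from eqv_add[OF R_shift[OF X] eqv_refl[of KK "\<lambda>x. - delta X x"]]
  show ?thesis by (rule eqv_fun) auto
qed

lemma R_sum: assumes X: "X \<in> obj C" and Y: "Y \<in> obj C"
  shows "\<exists>Z \<in> obj C. eqv KK (delta Z) (\<lambda>x. delta X x + delta Y x)"
proof -
  obtain A where A: "A \<in> obj C" "isomorphic C (shO C A) X" using SH[OF TC] X unfolding is_shift_def by blast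
  obtain g h where T: "(zro C A Y, g, h) \<in> dist C" using TR1c[OF TC] zro_st[OF TC A(1) Y] by blast
  have s: "src C (zro C A Y) = A" "tgt C (zro C A Y) = Y" using zro_st[OF TC A(1) Y] by auto
  have Z: "tgt C g \<in> obj C" using dist_D(3)[OF TC T] .
  have e1: "eqv KK (\<lambda>x. delta A x + delta (tgt C g) x) (delta Y)" using R_tri[OF T] s by simp
  have e2: "eqv KK (\<lambda>x. - delta A x) (delta (shO C A))" using eqv_sym[OF R_shift'[OF A(1)]] .
  have e3: "eqv KK (delta (shO C A)) (delta X)" using R_iso[OF A(2)] .
  from eqv_add[OF e1 eqv_trans[OF e2 e3]]
  have "eqv KK (delta (tgt C g)) (\<lambda>x. delta X x + delta Y x)" by (rule eqv_fun) auto
  then show ?thesis using Z by blast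
qed

lemma R_nat: assumes X: "X \<in> obj C" shows "\<exists>Y \<in> obj C. eqv KK (\<lambda>x. of_nat n * delta X x) (delta Y)"
proof (induction n)
  case 0
  obtain Z where Z: "is_zero_obj C Z" using ex_zero[OF TC] by blast
  have "eqv KK (\<lambda>x. of_nat 0 * delta X x) (delta Z)" using eqv_sym[OF R_zero[OF Z]] by (rule eqv_fun) auto
  then show ?case using zero_obj[OF TC Z] by blast
next
  case (Suc n)
  then obtain Y where Y: "Y \<in> obj C" "eqv KK (\<lambda>x. of_nat n * delta X x) (delta Y)" by blast
  obtain W where W: "W \<in> obj C" "eqv KK (delta W) (\<lambda>x. delta Y x + delta X x)" using R_sum[OF Y(1) X] by blast
  from eqv_add[OF Y(2) eqv_refl[of KK "delta X"]]
  have "eqv KK (\<lambda>x. of_nat (Suc n) * delta X x) (\<lambda>x. delta Y x + delta X x)"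
    by (rule eqv_fun) (auto simp: algebra_simps)
  then have "eqv KK (\<lambda>x. of_nat (Suc n) * delta X x) (delta W)" using eqv_trans[OF _ eqv_sym[OF W(2)]] by blast
  then show ?case using W(1) by blast
qed

lemma R_int: assumes X: "X \<in> obj C" shows "\<exists>Y \<in> obj C. eqv KK (\<lambda>x. of_int k * delta X x) (delta Y)"
proof (cases "k \<ge> 0")
  case True
  then obtain n where "k = int n" using nonneg_int_cases by blast
  then show ?thesis using R_nat[OF X, of n] by simp
next
  case False
  then have "- k \<ge> 0" by simp
  then obtain n where "- k = int n" using nonneg_int_cases by blast
  then have k: "k = - int n" by simp
  obtain Y where Y: "Y \<in> obj C" "eqv KK (\<lambda>x. of_nat n * delta X x) (delta Y)" using R_nat[OF X, of n] by blast
  have "eqv KK (\<lambda>x. - delta Y x) (delta (shO C Y))" using eqv_sym[OF R_shift'[OF Y(1)]] .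
  moreover from eqv_smult[OF Y(2), of "-1"]
  have "eqv KK (\<lambda>x. of_int k * delta X x) (\<lambda>x. - delta Y x)" by (rule eqv_fun) (auto simp: k)
  ultimately have "eqv KK (\<lambda>x. of_int k * delta X x) (delta (shO C Y))" by (rule eqv_trans[rotated])
  then show ?thesis using shO_obj[OF TC Y(1)] by blast
qed

end


lemma fvec_upd0: "u \<in> fvec S \<Longrightarrow> u(y := 0) \<in> fvec S"
proof -
  assume u: "u \<in> fvec S"
  have "{x. (u(y:=0)) x \<noteq> 0} \<subseteq> {x. u x \<noteq> 0}" by auto
  moreover have "finite {x. u x \<noteq> 0}" using u unfolding fvec_def by simp
  ultimately have "finite {x. (u(y:=0)) x \<noteq> 0}" by (rule finite_subset)
  moreover have "\<forall>x. (u(y:=0)) x \<noteq> 0 \<longrightarrow> x \<in> S" using u unfolding fvec_def by auto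
  ultimately show ?thesis unfolding fvec_def by blast
qed

context
  fixes C :: "('o,'m,'x) tricat_scheme"
  assumes TC: "triangulated C"
begin

lemma R_rep_aux:
  assumes F: "finite F"
  shows "\<forall>u. u \<in> fvec (obj C) \<longrightarrow> {x. u x \<noteq> 0} \<subseteq> F \<longrightarrow>
    (\<exists>X \<in> obj C. \<exists>n::nat. n > 0 \<and> eqv (relgens C (obj C)) (\<lambda>x. of_nat n * u x) (delta X))"
  using F
proof (induction rule: finite_induct)
  case empty
  show ?case
  proof (intro allI impI)
    fix u :: "'o \<Rightarrow> rat" assume "{x. u x \<noteq> 0} \<subseteq> {}"
    then have u: "u = (\<lambda>_. 0)" by auto
    obtain Z where Z: "is_zero_obj C Z" using ex_zero[OF TC] by blast
    have "eqv (relgens C (obj C)) (\<lambda>x. of_nat 1 * u x) (delta Z)"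
      using eqv_sym[OF R_zero[OF TC Z]] by (rule eqv_fun) (auto simp: u)
    then show "\<exists>X \<in> obj C. \<exists>n::nat. n > 0 \<and> eqv (relgens C (obj C)) (\<lambda>x. of_nat n * u x) (delta X)"
      using zero_obj[OF TC Z] by (intro bexI[of _ Z] exI[of _ 1]) auto
  qed
next
  case (insert y F)
  show ?case
  proof (intro allI impI)
    fix u :: "'o \<Rightarrow> rat" assume u: "u \<in> fvec (obj C)" and su: "{x. u x \<noteq> 0} \<subseteq> insert y F"
    define u' where "u' = u(y := 0)"
    have u': "u' \<in> fvec (obj C)" using fvec_upd0[OF u] u'_def by simp
    have su': "{x. u' x \<noteq> 0} \<subseteq> F" using su u'_def by auto
    obtain X n where X: "X \<in> obj C" "n > 0" "eqv (relgens C (obj C)) (\<lambda>x. of_nat n * u' x) (delta X)"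
      using insert.IH u' su' by blast
    show "\<exists>X \<in> obj C. \<exists>n::nat. n > 0 \<and> eqv (relgens C (obj C)) (\<lambda>x. of_nat n * u x) (delta X)"
    proof (cases "u y = 0")
      case True
      then have "u = u'" unfolding u'_def by auto
      then show ?thesis using X by blast
    next
      case False
      then have y: "y \<in> obj C" using u unfolding fvec_def by blast
      obtain c d where cd: "quotient_of (u y) = (c, d)" by (cases "quotient_of (u y)") auto
      have d: "d > 0" using quotient_of_denom_pos[OF cd] .
      have uy: "u y = of_int c / of_int d" using quotient_of_div[OF cd] .
      obtain X1 where X1: "X1 \<in> obj C" "eqv (relgens C (obj C)) (\<lambda>x. of_int d * delta X x) (delta X1)"
        using R_int[OF TC X(1), of d] by blast
      obtain Y1 where Y1: "Y1 \<in> obj C" "eqv (relgens C (obj C)) (\<lambda>x. of_int (int n * c) * delta y x) (delta Y1)"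
        using R_int[OF TC y, of "int n * c"] by blast
      obtain W where W: "W \<in> obj C" "eqv (relgens C (obj C)) (delta W) (\<lambda>x. delta X1 x + delta Y1 x)"
        using R_sum[OF TC X1(1) Y1(1)] by blast
      have e1: "eqv (relgens C (obj C)) (\<lambda>x. of_int d * (of_nat n * u' x)) (delta X1)"
        using eqv_trans[OF eqv_smult[OF X(3), of "of_int d"] X1(2)] .
      have e2: "eqv (relgens C (obj C)) (\<lambda>x. of_int d * (of_nat n * u' x) + of_int (int n * c) * delta y x)
          (\<lambda>x. delta X1 x + delta Y1 x)"
        using eqv_add[OF e1 Y1(2)] .
      have feq: "(\<lambda>x. of_int d * (of_nat n * u' x) + of_int (int n * c) * delta y x) =
                 (\<lambda>x. of_nat (n * nat d) * u x)"
      proof (rule ext)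
        fix x
        show "of_int d * (of_nat n * u' x) + of_int (int n * c) * delta y x = of_nat (n * nat d) * u x"
        proof (cases "x = y")
          case True
          have "of_nat (n * nat d) * u x = of_nat n * of_int d * (of_int c / of_int d)"
            using True uy d by simp
          also have "\<dots> = of_nat n * of_int c" using d by simp
          finally show ?thesis using True by (simp add: u'_def delta_def) (metis mult.commute)
        next
          case False
          then show ?thesis using d by (simp add: u'_def delta_def)
        qed
      qed
      have "eqv (relgens C (obj C)) (\<lambda>x. of_nat (n * nat d) * u x) (delta W)"
        using eqv_trans[OF eqv_fun[OF e2 feq refl] eqv_sym[OF W(2)]] .
      moreover have "n * nat d > 0" using X(2) d by simp
      ultimately show ?thesis using W(1) by blast
    qed
  qed
qed

lemma R_rep: "u \<in> fvec (obj C) \<Longrightarrow>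
    \<exists>X \<in> obj C. \<exists>n::nat. n > 0 \<and> eqv (relgens C (obj C)) (\<lambda>x. of_nat n * u x) (delta X)"
  using R_rep_aux[of "{x. u x \<noteq> 0}"] unfolding fvec_def by blast

end


theorem proposition3p10:
  fixes C :: "('o, 'm) tricat" and H :: "('o \<Rightarrow> rat) set set"
  assumes "triangulated C"
    and "GQ_subspace C H"
  shows "\<exists>!M. M \<in> I_H C H \<and> (\<forall>D \<in> I_H C H. M \<subseteq> D \<longrightarrow> D = M)"
proof -
  note TC = assms(1)
  let ?O = "obj C"
  let ?K = "relgens C (obj C)"
  let ?cl = "cls C (obj C)"
  have Hsub: "H \<subseteq> GQ C ?O" and H0: "?cl (\<lambda>_. 0) \<in> H"
    and Hadd: "\<And>a b. a \<in> H \<Longrightarrow> b \<in> H \<Longrightarrow> ?cl (\<lambda>x. rep a x + rep b x) \<in> H"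
    and Hsm: "\<And>a c. a \<in> H \<Longrightarrow> ?cl (\<lambda>x. c * rep a x) \<in> H"
    using assms(2) unfolding GQ_subspace_def by auto
  have Hcl: "?cl w \<in> H" if v: "v \<in> fvec ?O" and w: "w \<in> fvec ?O" and e: "eqv ?K v w" and h: "?cl v \<in> H" for v w
    using cls_eq_iff[OF v w, of C] e h by simp
  have Hadd': "?cl (\<lambda>x. v x + w x) \<in> H"
    if v: "v \<in> fvec ?O" and w: "w \<in> fvec ?O" and hv: "?cl v \<in> H" and hw: "?cl w \<in> H" for v w
  proof -
    have r1: "rep (?cl v) \<in> fvec ?O" "eqv ?K (rep (?cl v)) v" using rep_cls_eqv[OF v] by auto
    have r2: "rep (?cl w) \<in> fvec ?O" "eqv ?K (rep (?cl w)) w" using rep_cls_eqv[OF w] by auto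
    show ?thesis using Hcl[OF fvec_add[OF r1(1) r2(1)] fvec_add[OF v w] eqv_add[OF r1(2) r2(2)] Hadd[OF hv hw]] .
  qed
  have Hsm': "?cl (\<lambda>x. c * v x) \<in> H" if v: "v \<in> fvec ?O" and hv: "?cl v \<in> H" for v c
  proof -
    have r1: "rep (?cl v) \<in> fvec ?O" "eqv ?K (rep (?cl v)) v" using rep_cls_eqv[OF v] by auto
    show ?thesis using Hcl[OF fvec_smult[OF r1(1)] fvec_smult[OF v] eqv_smult[OF r1(2)] Hsm[OF hv]] .
  qed
  have dO: "delta X \<in> fvec ?O" if "X \<in> ?O" for X using fvec_delta[OF that] .
  define M where "M = {X \<in> ?O. ?cl (delta X) \<in> H}"
  have MO: "M \<subseteq> ?O" unfolding M_def by auto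
  have sub1: "\<forall>v. v \<in> fvec M \<longrightarrow> {x. v x \<noteq> 0} \<subseteq> F \<longrightarrow> ?cl v \<in> H" if F: "finite F" for F
    using F
  proof (induction rule: finite_induct)
    case empty
    show ?case
    proof (intro allI impI)
      fix v :: "'o \<Rightarrow> rat" assume "{x. v x \<noteq> 0} \<subseteq> {}"
      then have "v = (\<lambda>_. 0)" by auto
      then show "?cl v \<in> H" using H0 by simp
    qed
  next
    case (insert y F)
    show ?case
    proof (intro allI impI)
      fix v :: "'o \<Rightarrow> rat" assume v: "v \<in> fvec M" and sv: "{x. v x \<noteq> 0} \<subseteq> insert y F"
      define v' where "v' = v(y := 0)"
      have v': "v' \<in> fvec M" using fvec_upd0[OF v] v'_def by simp
      have sv': "{x. v' x \<noteq> 0} \<subseteq> F" using sv v'_def by auto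
      have h': "?cl v' \<in> H" using insert.IH v' sv' by blast
      show "?cl v \<in> H"
      proof (cases "v y = 0")
        case True
        then have "v = v'" unfolding v'_def by auto
        then show ?thesis using h' by simp
      next
        case False
        then have y: "y \<in> M" using v unfolding fvec_def by blast
        then have yO: "y \<in> ?O" and hy: "?cl (delta y) \<in> H" unfolding M_def by auto
        have hy': "?cl (\<lambda>x. v y * delta y x) \<in> H" using Hsm'[OF dO[OF yO] hy] .
        have v'O: "v' \<in> fvec ?O" using v' fvec_mono[OF MO] by blast
        have "?cl (\<lambda>x. v' x + v y * delta y x) \<in> H"
          using Hadd'[OF v'O fvec_smult[OF dO[OF yO]] h' hy'] .
        moreover have "(\<lambda>x. v' x + v y * delta y x) = v" by (rule ext) (simp add: v'_def delta_def)
        ultimately show ?thesis by simp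
      qed
    qed
  qed
  have img: "GQ_image C M = H"
  proof -
    have "?cl ` fvec M = H"
    proof
      show "?cl ` fvec M \<subseteq> H"
      proof
        fix a assume "a \<in> ?cl ` fvec M"
        then obtain v where v: "v \<in> fvec M" "a = ?cl v" by blast
        have "finite {x. v x \<noteq> 0}" using v(1) unfolding fvec_def by simp
        then show "a \<in> H" using sub1 v by blast
      qed
    next
      show "H \<subseteq> ?cl ` fvec M"
      proof
        fix a assume a: "a \<in> H"
        then obtain u where u: "u \<in> fvec ?O" "a = ?cl u" using Hsub unfolding GQ_def by blast
        obtain X n where X: "X \<in> ?O" "n > 0" "eqv ?K (\<lambda>x. of_nat n * u x) (delta X)"
          using R_rep[OF TC u(1)] by blast
        have "?cl (\<lambda>x. of_nat n * u x) \<in> H" using Hsm'[OF u(1)] a u(2) by simp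
        then have "?cl (delta X) \<in> H" using Hcl[OF fvec_smult[OF u(1)] dO[OF X(1)] X(3)] by simp
        then have XM: "X \<in> M" using X(1) unfolding M_def by simp
        define v where "v = (\<lambda>x. (1 / of_nat n) * delta X x)"
        have vM: "v \<in> fvec M" unfolding v_def by (rule fvec_smult[OF fvec_delta[OF XM]])
        have "eqv ?K (\<lambda>x. (1 / of_nat n) * (of_nat n * u x)) v"
          using eqv_smult[OF X(3), of "1 / of_nat n"] v_def by simp
        moreover have "(\<lambda>x. (1 / of_nat n) * (of_nat n * u x)) = u" using X(2) by auto
        ultimately have "eqv ?K u v" by simp
        then have "?cl v = ?cl u" using cls_eq_iff[OF u(1), of v C] vM fvec_mono[OF MO] by auto
        then show "a \<in> ?cl ` fvec M" using vM u(2) by blast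
      qed
    qed
    then show ?thesis using GQ_image_eq[OF MO] by simp
  qed
  have tsub: "triangulated_subcat C M"
    unfolding triangulated_subcat_def
  proof (intro conjI ballI allI impI)
    show "M \<subseteq> ?O" by (rule MO)
  next
    fix X Y assume X: "X \<in> M" and i: "isomorphic C X Y"
    have XY: "X \<in> ?O" "Y \<in> ?O" using i unfolding isomorphic_def by auto
    have "?cl (delta Y) \<in> H" using Hcl[OF dO[OF XY(1)] dO[OF XY(2)] R_iso[OF TC i]] X unfolding M_def by simp
    then show "Y \<in> M" using XY unfolding M_def by simp
  next
    fix X assume X: "X \<in> ?O" "X \<in> M"
    have "?cl (\<lambda>x. (-1) * delta X x) \<in> H" using Hsm'[OF dO[OF X(1)], of "-1"] X unfolding M_def by blast
    moreover have "eqv ?K (\<lambda>x. (-1) * delta X x) (delta (shO C X))"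
      using eqv_sym[OF R_shift'[OF TC X(1)]] by (rule eqv_fun) auto
    ultimately have "?cl (delta (shO C X)) \<in> H"
      using Hcl[OF fvec_smult[OF dO[OF X(1)]] dO[OF shO_obj[OF TC X(1)]]] by blast
    then show "shO C X \<in> M" using shO_obj[OF TC X(1)] unfolding M_def by simp
  next
    fix X assume X: "X \<in> ?O" "shO C X \<in> M"
    have SX: "shO C X \<in> ?O" using shO_obj[OF TC X(1)] .
    have "?cl (\<lambda>x. (-1) * delta (shO C X) x) \<in> H" using Hsm'[OF dO[OF SX], of "-1"] X unfolding M_def by blast
    moreover have "eqv ?K (\<lambda>x. (-1) * delta (shO C X) x) (delta X)"
      using eqv_smult[OF R_shift'[OF TC X(1)], of "-1"] by (rule eqv_fun) auto
    ultimately have "?cl (delta X) \<in> H"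
      using Hcl[OF fvec_smult[OF dO[OF SX]] dO[OF X(1)]] by blast
    then show "X \<in> M" using X(1) unfolding M_def by simp
  next
    fix f g h assume a: "(f, g, h) \<in> dist C \<and> src C f \<in> M \<and> tgt C f \<in> M"
    then have T: "(f, g, h) \<in> dist C" and s: "src C f \<in> M" and t: "tgt C f \<in> M" by auto
    note D = dist_D[OF TC T]
    have hs: "?cl (\<lambda>x. (-1) * delta (src C f) x) \<in> H" using Hsm'[OF dO[OF D(1)], of "-1"] s unfolding M_def by blast
    have ht: "?cl (delta (tgt C f)) \<in> H" using t unfolding M_def by simp
    have hsum: "?cl (\<lambda>x. delta (tgt C f) x + (-1) * delta (src C f) x) \<in> H"
      using Hadd'[OF dO[OF D(2)] fvec_smult[OF dO[OF D(1)]] ht hs] .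
    have e: "eqv ?K (delta (tgt C g)) (\<lambda>x. delta (tgt C f) x + (-1) * delta (src C f) x)"
      using eqv_add[OF R_tri[OF TC T] eqv_refl[of ?K "\<lambda>x. - delta (src C f) x"]]
      by (rule eqv_fun) auto
    have "?cl (delta (tgt C g)) \<in> H"
      using Hcl[OF fvec_add[OF dO[OF D(2)] fvec_smult[OF dO[OF D(1)]]] dO[OF D(3)] eqv_sym[OF e] hsum] .
    then show "tgt C g \<in> M" using D(3) unfolding M_def by simp
  qed
  have dense: "dense_subcat C M"
    unfolding dense_subcat_def
  proof (intro conjI ballI)
    show "triangulated_subcat C M" by (rule tsub)
  next
    fix U assume U: "U \<in> ?O"
    obtain g h where T: "(zro C U U, g, h) \<in> dist C" using TR1c[OF TC] zro_st[OF TC U U] by blast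
    have st: "src C (zro C U U) = U" "tgt C (zro C U U) = U" using zro_st[OF TC U U] by auto
    have Z: "tgt C g \<in> ?O" using dist_D(3)[OF TC T] .
    have "eqv ?K (delta (tgt C g)) (\<lambda>_. 0)"
      using eqv_add[OF R_tri[OF TC T] eqv_refl[of ?K "\<lambda>x. - delta U x"]] unfolding st
      by (rule eqv_fun) auto
    have "?cl (delta (tgt C g)) \<in> H"
      using Hcl[OF fvec_zero dO[OF Z] eqv_sym[OF \<open>eqv ?K (delta (tgt C g)) (\<lambda>_. 0)\<close>] H0] .
    then have "tgt C g \<in> M" using Z unfolding M_def by simp
    then show "\<exists>V \<in> ?O. \<exists>W \<in> M. is_biprod C U V W"
      using biprod_cone[OF TC U T] shO_obj[OF TC U] by blast
  qed
  have MI: "M \<in> I_H C H" unfolding I_H_def using dense img by simp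
  have maxl: "D \<subseteq> M" if D: "D \<in> I_H C H" for D
  proof
    fix X assume X: "X \<in> D"
    have DO: "D \<subseteq> ?O" using D unfolding I_H_def dense_subcat_def triangulated_subcat_def by auto
    have "GQ_image C D = H" using D unfolding I_H_def by simp
    then have "?cl ` fvec D = H" using GQ_image_eq[OF DO] by simp
    moreover have "delta X \<in> fvec D" using fvec_delta[OF X] .
    ultimately have "?cl (delta X) \<in> H" by blast
    then show "X \<in> M" using X DO unfolding M_def by auto
  qed
  show ?thesis
  proof (rule ex1I[of _ M])
    show "M \<in> I_H C H \<and> (\<forall>D \<in> I_H C H. M \<subseteq> D \<longrightarrow> D = M)" using MI maxl by blast
  next
    fix M' assume "M' \<in> I_H C H \<and> (\<forall>D \<in> I_H C H. M' \<subseteq> D \<longrightarrow> D = M')"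
    then show "M' = M" using maxl MI by blast
  qed
qed


end
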